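(* Fix integers $d\ge 2$ and $n$ with $d+2\leq n\leq 2d$. Every $n$-point spherical code $X$ in $S^{d-1}$ has no Tammes rattler.
   Context: $[n]=\{1,\ldots,n\}$. For a configuration $X=\{x_i\}_{i\in[n]}$ in the unit sphere $S^{d-1}\subseteq\mathbb{R}^d$, $\alpha(X):=\max_{i\neq j}\langle x_i,x_j\rangle$. A spherical code is an $n$-point configuration in $S^{d-1}$ minimizing $\alpha$. A Tammes rattler of $X$ is an index $j\in[n]$ with $\max_{i\in[n]\setminus\{j\}}\langle x_i,x_j\rangle<\alpha(X)$. *)

theory Defs
  imports "HOL-Analysis.Analysis"
begin

text \<open>A configuration of n points is a family x indexed by [n] = {1..n}
  with values in the unit sphere of a Euclidean space of dimension d = DIM('a).\<close>

definition on_sphere :: "nat \<Rightarrow> (nat \<Rightarrow> 'a::euclidean_space) \<Rightarrow> bool" where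
  "on_sphere n x \<longleftrightarrow> (\<forall>i\<in>{1..n}. norm (x i) = 1)"

definition alpha :: "nat \<Rightarrow> (nat \<Rightarrow> 'a::euclidean_space) \<Rightarrow> real" where
  "alpha n x = Max {inner (x i) (x j) | i j. i \<in> {1..n} \<and> j \<in> {1..n} \<and> i \<noteq> j}"

definition spherical_code :: "nat \<Rightarrow> (nat \<Rightarrow> 'a::euclidean_space) \<Rightarrow> bool" where
  "spherical_code n x \<longleftrightarrow> on_sphere n x \<and>
     (\<forall>y::nat \<Rightarrow> 'a. on_sphere n y \<longrightarrow> alpha n x \<le> alpha n y)"

definition tammes_rattler :: "nat \<Rightarrow> (nat \<Rightarrow> 'a::euclidean_space) \<Rightarrow> nat \<Rightarrow> bool" where
  "tammes_rattler n x j \<longleftrightarrow> j \<in> {1..n} \<and>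
     Max {inner (x i) (x j) | i. i \<in> {1..n} - {j}} < alpha n x"

end

theory Submission
  imports Defs
begin

lemma indep_lemma:
  fixes t :: "'a::euclidean_space set" and u :: 'a
  assumes fin: "finite t"
    and pw: "\<And>v w. v \<in> t \<Longrightarrow> w \<in> t \<Longrightarrow> v \<noteq> w \<Longrightarrow> inner v w \<le> 0"
    and neg: "\<And>v. v \<in> t \<Longrightarrow> inner u v < 0"
    and sum0: "(\<Sum>v\<in>t. c v *\<^sub>R v) = 0"
  shows "\<forall>v\<in>t. c v = 0"
proof -
  define P where "P = {v\<in>t. c v > 0}"
  define N where "N = {v\<in>t. c v < 0}"
  define Z where "Z = {v\<in>t. c v = 0}"
  have finP: "finite P" and finN: "finite N" and finZ: "finite Z"
    using fin by (auto simp: P_def N_def Z_def)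
  have tdec: "t = P \<union> (N \<union> Z)" by (auto simp: P_def N_def Z_def)
  have sumZ: "(\<Sum>v\<in>Z. c v *\<^sub>R v) = 0" by (simp add: Z_def)
  have split: "(\<Sum>v\<in>t. c v *\<^sub>R v) = (\<Sum>v\<in>P. c v *\<^sub>R v) + ((\<Sum>v\<in>N. c v *\<^sub>R v) + (\<Sum>v\<in>Z. c v *\<^sub>R v))"
    unfolding tdec
    apply (subst sum.union_disjoint)
       apply (simp_all add: finP finN finZ)
     apply (auto simp: P_def N_def Z_def)[1]
    apply (subst sum.union_disjoint)
       apply (auto simp: finN finZ N_def Z_def fin)
    done
  define w where "w = (\<Sum>v\<in>P. c v *\<^sub>R v)"
  have wN: "(\<Sum>v\<in>N. c v *\<^sub>R v) = - w"
    using sum0 split sumZ unfolding w_def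
    by (simp add: eq_neg_iff_add_eq_0 add.commute)
  have "inner w w = - inner w (\<Sum>v\<in>N. c v *\<^sub>R v)" using wN by simp
  also have "\<dots> = - (\<Sum>p\<in>P. \<Sum>q\<in>N. c p * c q * inner p q)"
    unfolding w_def by (simp add: inner_sum_left inner_sum_right sum_distrib_left mult.assoc sum.swap[of _ N P] mult.left_commute)
  also have "\<dots> \<le> 0"
  proof -
    have "0 \<le> (\<Sum>p\<in>P. \<Sum>q\<in>N. c p * c q * inner p q)"
    proof (intro sum_nonneg)
      fix p q assume p: "p \<in> P" and q: "q \<in> N"
      have "p \<noteq> q" using p q by (auto simp: P_def N_def)
      hence "inner p q \<le> 0" using pw p q by (auto simp: P_def N_def)
      moreover have "c p * c q \<le> 0" using p q
        by (auto simp: P_def N_def mult_nonneg_nonpos intro: mult_pos_neg less_imp_le)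
      ultimately show "0 \<le> c p * c q * inner p q"
        by (simp add: mult_nonpos_nonpos)
    qed
    thus ?thesis by simp
  qed
  finally have "w = 0" using inner_ge_zero[of w] by (simp add: antisym)
  have Pe: "P = {}"
  proof (rule ccontr)
    assume "P \<noteq> {}"
    have "inner u w = (\<Sum>p\<in>P. c p * inner u p)"
      unfolding w_def by (simp add: inner_sum_right)
    moreover have "0 < (\<Sum>p\<in>P. - (c p * inner u p))"
    proof (rule sum_pos[OF finP \<open>P \<noteq> {}\<close>])
      fix p assume "p \<in> P"
      thus "0 < - (c p * inner u p)" using neg by (auto simp: P_def mult_pos_neg)
    qed
    ultimately show False using \<open>w = 0\<close> by (simp add: sum_negf)
  qed
  have Ne: "N = {}"
  proof (rule ccontr)
    assume "N \<noteq> {}"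
    have "inner u (-w) = (\<Sum>p\<in>N. c p * inner u p)"
      unfolding wN[symmetric] by (simp add: inner_sum_right)
    also have "\<dots> > 0"
    proof (rule sum_pos[OF finN \<open>N \<noteq> {}\<close>])
      fix p assume "p \<in> N"
      thus "0 < c p * inner u p" using neg by (auto simp: N_def mult_neg_neg)
    qed
    finally show False using \<open>w = 0\<close> by simp
  qed
  show ?thesis using Pe Ne by (auto simp: P_def N_def) (meson linorder_neqE_linordered_idom)
qed

lemma indep_set:
  fixes t :: "'a::euclidean_space set" and u :: 'a
  assumes fin: "finite t"
    and pw: "\<And>v w. v \<in> t \<Longrightarrow> w \<in> t \<Longrightarrow> v \<noteq> w \<Longrightarrow> inner v w \<le> 0"
    and neg: "\<And>v. v \<in> t \<Longrightarrow> inner u v < 0"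
  shows "independent t"
  using indep_lemma[OF fin pw neg] fin unfolding independent_explicit by blast

lemma alpha_le0:
  fixes x :: "nat \<Rightarrow> 'a::euclidean_space"
  assumes "n \<ge> 2" and "\<And>i j. i \<in> {1..n} \<Longrightarrow> j \<in> {1..n} \<Longrightarrow> i \<noteq> j \<Longrightarrow> inner (x i) (x j) \<le> 0"
  shows "alpha n x \<le> 0"
proof -
  let ?S = "{inner (x i) (x j) | i j. i \<in> {1..n} \<and> j \<in> {1..n} \<and> i \<noteq> j}"
  have "?S \<subseteq> (\<lambda>(i,j). inner (x i) (x j)) ` ({1..n} \<times> {1..n})" by auto
  hence fin: "finite ?S" by (rule finite_subset) auto
  have ne: "?S \<noteq> {}" using assms(1) by auto (metis One_nat_def Suc_1 Suc_leD atLeastAtMost_iff le_refl n_not_Suc_n)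
  show ?thesis unfolding alpha_def using fin ne assms(2) by (auto simp: Max_le_iff)
qed

lemma alpha_ge:
  fixes x :: "nat \<Rightarrow> 'a::euclidean_space"
  assumes "i \<in> {1..n}" "j \<in> {1..n}" "i \<noteq> j"
  shows "inner (x i) (x j) \<le> alpha n x"
proof -
  let ?S = "{inner (x i) (x j) | i j. i \<in> {1..n} \<and> j \<in> {1..n} \<and> i \<noteq> j}"
  have "?S \<subseteq> (\<lambda>(i,j). inner (x i) (x j)) ` ({1..n} \<times> {1..n})" by auto
  hence fin: "finite ?S" by (rule finite_subset) auto
  show ?thesis unfolding alpha_def by (rule Max_ge[OF fin]) (use assms in blast)
qed

theorem lemma9:
  fixes x :: "nat \<Rightarrow> 'a::euclidean_space" and n :: nat
  assumes "DIM('a) \<ge> 2"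
    and "DIM('a) + 2 \<le> n" and "n \<le> 2 * DIM('a)"
    and "spherical_code n x"
  shows "\<not> (\<exists>j. tammes_rattler n x j)"
proof
  assume "\<exists>j. tammes_rattler n x j"
  then obtain j where jn: "j \<in> {1..n}"
    and rat: "Max {inner (x i) (x j) | i. i \<in> {1..n} - {j}} < alpha n x"
    unfolding tammes_rattler_def by blast
  define d where "d = DIM('a)"
  obtain bs where bs: "set bs = (Basis :: 'a set)" "distinct bs"
    using finite_distinct_list[OF finite_Basis] by blast
  have lbs: "length bs = d" unfolding d_def using bs by (metis distinct_card)
  define y :: "nat \<Rightarrow> 'a" where "y i = (if i \<le> d then bs!(i-1) else -(bs!(i-1-d)))" for i
  have ysph: "on_sphere n y"
    unfolding on_sphere_def
  proof
    fix i assume i: "i \<in> {1..n}"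
    show "norm (y i) = 1"
    proof (cases "i \<le> d")
      case True
      hence "bs!(i-1) \<in> Basis" using bs lbs i by (metis atLeastAtMost_iff diff_less le_trans less_numeral_extra(1) nat_less_le not_one_le_zero nth_mem linorder_not_le)
      thus ?thesis using True by (simp add: y_def)
    next
      case False
      hence "bs!(i-1-d) \<in> Basis" using bs lbs i assms(3) unfolding d_def[symmetric] by (intro nth_mem[of "i-1-d" bs, simplified bs]) auto
      thus ?thesis using False by (simp add: y_def)
    qed
  qed
  have yinner: "inner (y i) (y k) \<le> 0" if i: "i \<in> {1..n}" and k: "k \<in> {1..n}" and ik: "i \<noteq> k" for i k
  proof -
    have ilt: "i - 1 < length bs \<or> i > d" and klt: "k - 1 < length bs \<or> k > d" using i k lbs by auto
    have ilt2: "i - 1 - d < length bs" and klt2: "k - 1 - d < length bs" using i k lbs assms(3) unfolding d_def[symmetric] by auto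
    have B: "\<And>a b. a < length bs \<Longrightarrow> b < length bs \<Longrightarrow> a \<noteq> b \<Longrightarrow> inner (bs!a) (bs!b) = 0"
      using bs by (metis inner_not_same_Basis nth_eq_iff_index_eq nth_mem)
    have B1: "\<And>a. a < length bs \<Longrightarrow> inner (bs!a) (bs!a) = 1"
      using bs by (metis inner_Basis nth_mem)
    show ?thesis
    proof (cases "i \<le> d"; cases "k \<le> d")
      assume "i \<le> d" "k \<le> d" thus ?thesis using B[of "i-1" "k-1"] ik i k lbs by (auto simp: y_def)
    next
      assume "i \<le> d" "\<not> k \<le> d"
      thus ?thesis using B[of "i-1" "k-1-d"] B1[of "i-1"] i k lbs klt2 by (cases "i-1 = k-1-d") (auto simp: y_def)
    next
      assume "\<not> i \<le> d" "k \<le> d"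
      thus ?thesis using B[of "i-1-d" "k-1"] B1[of "k-1"] i k lbs ilt2 by (cases "i-1-d = k-1") (auto simp: y_def)
    next
      assume "\<not> i \<le> d" "\<not> k \<le> d"
      thus ?thesis using B[of "i-1-d" "k-1-d"] ik i k lbs ilt2 klt2 by (auto simp: y_def)
    qed
  qed
  have "alpha n y \<le> 0" by (rule alpha_le0) (use assms(1,2) yinner in auto)
  hence ax: "alpha n x \<le> 0" using assms(4) ysph unfolding spherical_code_def by force
  have xs: "on_sphere n x" using assms(4) unfolding spherical_code_def by blast
  have pw: "inner (x i) (x k) \<le> 0" if "i \<in> {1..n}" "k \<in> {1..n}" "i \<noteq> k" for i k
    using alpha_ge[OF that, of x] ax by linarith
  let ?S = "{inner (x i) (x j) | i. i \<in> {1..n} - {j}}"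
  have finS: "finite ?S" by simp
  have negj: "inner (x i) (x j) < 0" if "i \<in> {1..n} - {j}" for i
  proof -
    have "inner (x i) (x j) \<le> Max ?S" by (rule Max_ge[OF finS]) (use that in blast)
    thus ?thesis using rat ax by linarith
  qed
  define I where "I = {1..n} - {j}"
  have injx: "inj_on x I"
  proof
    fix i k assume "i \<in> I" "k \<in> I" "x i = x k"
    show "i = k"
    proof (rule ccontr)
      assume "i \<noteq> k"
      hence "inner (x i) (x k) \<le> 0" using pw \<open>i \<in> I\<close> \<open>k \<in> I\<close> by (auto simp: I_def)
      moreover have "norm (x i) = 1" using xs \<open>i \<in> I\<close> by (auto simp: on_sphere_def I_def)
      ultimately show False using \<open>x i = x k\<close> by (metis inner_eq_zero_iff norm_eq_zero zero_neq_one order_antisym inner_ge_zero)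
    qed
  qed
  have "independent (x ` I)"
  proof (rule indep_set[of _ "x j"])
    show "finite (x ` I)" by (simp add: I_def)
    show "\<And>v w. v \<in> x ` I \<Longrightarrow> w \<in> x ` I \<Longrightarrow> v \<noteq> w \<Longrightarrow> inner v w \<le> 0"
      using pw by (auto simp: I_def) (metis atLeastAtMost_iff)
    show "\<And>v. v \<in> x ` I \<Longrightarrow> inner (x j) v < 0"
      using negj by (force simp: I_def inner_commute[of "x j"])
  qed
  hence "card (x ` I) \<le> d" using independent_bound unfolding d_def by blast
  moreover have "card (x ` I) = n - 1" using injx jn by (simp add: card_image I_def)
  ultimately show False using assms(2) unfolding d_def by linarith
qed

end
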